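(* Let $f\in D$ and let $x\in V\setminus D$ with $l(x)\ge l(f)$. If there is a path $P$ in $G$ between $x$ and $f$ that contains no vertex of $D$ other than $f$, then there is a vertex $w\in V(H)$ such that $\delta_{G-D}(x,w)\le(2k-1)|P|$.
   Context: $G=(V,E)$ is an undirected graph with $n\ge3$ vertices and real edge weights in $[1,W]$; shortest paths in every subgraph are assumed unique; $\delta_{G'}$ denotes distance in a graph $G'$, $|P|$ the weighted length of a path $P$, and $G-R$ the graph with the vertex set $R$ deleted. Let $k=\ln n$. For $R\subseteq V$, $S\subseteq V\setminus R$, an $S$-restricted tree cover of $G-R$ is a family $\{T(w):w\in S\}$ of trees, $T(w)$ a subtree of $G-R$ rooted at $w$, such that (i) for all $u\in S$, $v\in V\setminus R$ there is $w\in S$ with $u,v\in V(T(w))$ and $\mathrm{dep}_{T(w)}(u)+\mathrm{dep}_{T(w)}(v)\le(2k-1)\delta_{G-R}(u,v)$ ($\mathrm{dep}_T(x)$ = weighted distance from $x$ to the root); (ii) each vertex lies in at most $kn^{1/k}(\ln n+1)$ trees. A vertex of such a tree $T$ is a trunk vertex if it lies on the $T$-path between two vertices of $S$; $\mathrm{Trunk}(T)$ is the subtree induced by trunk vertices; $\mathrm{pdeg}_T(v)$ is the degree of $v$ in $\mathrm{Trunk}(T)$ (0 if not trunk). Fix an integer $d\ge2$, a constant $c\ge1$, $s=4e d^{c+1}\ln^2 n+1$; $\mathrm{Hi}(\mathcal{C})$ is the set of vertices of pseudo-degree $>s$ in some tree of a tree cover $\mathcal{C}$. Fixed tree covers: $\mathcal{T}(S)$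 ($S$-restricted, of $G$) and $\mathcal{T}_R(S)$ ($(S\setminus R)$-restricted, of $G-R$), with $\mathcal{T}_\varnothing(S)=\mathcal{T}(S)$. Hierarchy tree: root $V$; a node $U$ is a leaf if $\mathrm{Hi}(\mathcal{T}(U))=\varnothing$, else it has children $W_1=\mathrm{Hi}(\mathcal{T}(U))$, $W_i=W_{i-1}\cup\mathrm{Hi}(\mathcal{T}_{W_{i-1}}(U))$ ($2\le i\le d$), recursively. Let $D\subseteq V$, $|D|\le d$, be the set of failed vertices, and fix a root-to-node path $V=U_1,U_2,\dots,U_p$ in the hierarchy tree, with $U_{p+1}=\varnothing$, such that every $f\in D$ has pseudo-degree at most $s$ in every tree of $\mathcal{T}:=\bigcup_{i=1}^p\mathcal{T}_{U_{i+1}}(U_i)$. The level $l(v)$ of $v\in V$ is the largest $l$ with $v\in U_l$. Let $s_0,t_0\in V\setminus D$ be two query vertices. For $f\in D$ and $T\in\mathcal{T}$ with $f\in V(T)$, let $N_T(f)=\{\mathrm{parent}_T(f)\}\cup(\mathrm{children}_T(f)\cap\mathrm{Trunk}(T))$ (the parent term omitted if $f$ is the root), $N(f)=\bigcup_{T\in\mathcal{T},\,f\in V(T)}N_T(f)$, and $V(H)=\big(\{s_0,t_0\}\cup\bigcup_{f\in D}N(f)\big)\setminus D$. *)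

theory Defs
  imports Complex_Main "HOL-Library.Extended_Real"
begin

text \<open>A graph is given by a vertex set V, an edge set E of 2-element subsets of V,
  and a weight function wt on edges. A subgraph is given by a vertex set A and an
  edge set F.\<close>

definition walk_in :: "'a set \<Rightarrow> 'a set set \<Rightarrow> 'a list \<Rightarrow> bool" where
  "walk_in A F p \<longleftrightarrow> p \<noteq> [] \<and> set p \<subseteq> A \<and>
     (\<forall>i. Suc i < length p \<longrightarrow> {p ! i, p ! Suc i} \<in> F)"

definition path_in :: "'a set \<Rightarrow> 'a set set \<Rightarrow> 'a list \<Rightarrow> bool" where
  "path_in A F p \<longleftrightarrow> walk_in A F p \<and> distinct p"

definition path_betw :: "'a set \<Rightarrow> 'a set set \<Rightarrow> 'a \<Rightarrow> 'a \<Rightarrow> 'a list \<Rightarrow> bool" where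
  "path_betw A F u v p \<longleftrightarrow> path_in A F p \<and> hd p = u \<and> last p = v"

definition plen :: "('a set \<Rightarrow> real) \<Rightarrow> 'a list \<Rightarrow> real" where
  "plen wt p = (\<Sum>i<length p - 1. wt {p ! i, p ! Suc i})"

text \<open>Distance in the subgraph (A,F); infinity if no path exists.\<close>
definition gdist :: "'a set \<Rightarrow> 'a set set \<Rightarrow> ('a set \<Rightarrow> real) \<Rightarrow> 'a \<Rightarrow> 'a \<Rightarrow> ereal" where
  "gdist A F wt u v = (INF p \<in> {p. path_betw A F u v p}. ereal (plen wt p))"

definition del_edges :: "'a set set \<Rightarrow> 'a set \<Rightarrow> 'a set set" where
  "del_edges E R = {e \<in> E. e \<inter> R = {}}"

definition dist_del :: "'a set \<Rightarrow> 'a set set \<Rightarrow> ('a set \<Rightarrow> real) \<Rightarrow> 'a set \<Rightarrow> 'a \<Rightarrow> 'a \<Rightarrow> ereal" where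
  "dist_del V E wt R u v = gdist (V - R) (del_edges E R) wt u v"

definition wgraph :: "'a set \<Rightarrow> 'a set set \<Rightarrow> ('a set \<Rightarrow> real) \<Rightarrow> real \<Rightarrow> bool" where
  "wgraph V E wt W \<longleftrightarrow> finite V \<and>
     E \<subseteq> {{u, v} | u v. u \<in> V \<and> v \<in> V \<and> u \<noteq> v} \<and>
     (\<forall>e\<in>E. 1 \<le> wt e \<and> wt e \<le> W)"

definition unique_sp :: "'a set \<Rightarrow> 'a set set \<Rightarrow> ('a set \<Rightarrow> real) \<Rightarrow> bool" where
  "unique_sp V E wt \<longleftrightarrow> (\<forall>A F u v p q. A \<subseteq> V \<longrightarrow> F \<subseteq> E \<longrightarrow>
      path_betw A F u v p \<longrightarrow> path_betw A F u v q \<longrightarrow>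
      ereal (plen wt p) = gdist A F wt u v \<longrightarrow> ereal (plen wt q) = gdist A F wt u v \<longrightarrow> p = q)"

type_synonym 'a rtree = "'a set \<times> 'a set set \<times> 'a"

definition tverts :: "'a rtree \<Rightarrow> 'a set" where "tverts T = fst T"
definition tedges :: "'a rtree \<Rightarrow> 'a set set" where "tedges T = fst (snd T)"
definition troot :: "'a rtree \<Rightarrow> 'a" where "troot T = snd (snd T)"

text \<open>T is a subtree of the subgraph (A,F): a subgraph in which any two vertices are
  joined by exactly one path (i.e. connected and acyclic), containing its root.\<close>
definition is_subtree :: "'a set \<Rightarrow> 'a set set \<Rightarrow> 'a rtree \<Rightarrow> bool" where
  "is_subtree A F T \<longleftrightarrow> tverts T \<subseteq> A \<and> tedges T \<subseteq> F \<and>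
     (\<forall>e\<in>tedges T. e \<subseteq> tverts T) \<and> troot T \<in> tverts T \<and>
     (\<forall>u\<in>tverts T. \<forall>v\<in>tverts T. \<exists>!p. path_betw (tverts T) (tedges T) u v p)"

definition tpath :: "'a rtree \<Rightarrow> 'a \<Rightarrow> 'a \<Rightarrow> 'a list" where
  "tpath T u v = (THE p. path_betw (tverts T) (tedges T) u v p)"

definition dep :: "('a set \<Rightarrow> real) \<Rightarrow> 'a rtree \<Rightarrow> 'a \<Rightarrow> real" where
  "dep wt T x = plen wt (tpath T x (troot T))"

definition tparent :: "'a rtree \<Rightarrow> 'a \<Rightarrow> 'a" where
  "tparent T v = tpath T v (troot T) ! 1"

definition tchildren :: "'a rtree \<Rightarrow> 'a \<Rightarrow> 'a set" where
  "tchildren T v = {c \<in> tverts T. c \<noteq> troot T \<and> tparent T c = v}"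

definition trunk :: "'a set \<Rightarrow> 'a rtree \<Rightarrow> 'a set" where
  "trunk S T = {v. \<exists>a\<in>S \<inter> tverts T. \<exists>b\<in>S \<inter> tverts T. v \<in> set (tpath T a b)}"

definition pdeg :: "'a set \<Rightarrow> 'a rtree \<Rightarrow> 'a \<Rightarrow> nat" where
  "pdeg S T v = (if v \<in> trunk S T then card {u \<in> trunk S T. {u, v} \<in> tedges T} else 0)"

definition is_tree_cover :: "'a set \<Rightarrow> 'a set set \<Rightarrow> ('a set \<Rightarrow> real) \<Rightarrow> 'a set \<Rightarrow> 'a set
    \<Rightarrow> ('a \<Rightarrow> 'a rtree) \<Rightarrow> bool" where
  "is_tree_cover V E wt R S C \<longleftrightarrow>
     (let n = real (card V); k = ln n in
       S \<subseteq> V - R \<and>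
       (\<forall>w\<in>S. is_subtree (V - R) (del_edges E R) (C w) \<and> troot (C w) = w) \<and>
       (\<forall>u\<in>S. \<forall>v\<in>V - R. dist_del V E wt R u v < \<infinity> \<longrightarrow>
          (\<exists>w\<in>S. u \<in> tverts (C w) \<and> v \<in> tverts (C w) \<and>
             ereal (dep wt (C w) u + dep wt (C w) v) \<le> ereal (2 * k - 1) * dist_del V E wt R u v)) \<and>
       (\<forall>v\<in>V. real (card {w \<in> S. v \<in> tverts (C w)}) \<le> k * n powr (1 / k) * (ln n + 1)))"

definition Hi :: "real \<Rightarrow> 'a set \<Rightarrow> ('a \<Rightarrow> 'a rtree) \<Rightarrow> 'a set" where
  "Hi s S C = {v. \<exists>w\<in>S. real (pdeg S (C w) v) > s}"

text \<open>TCR R S is the fixed cover T_R(S), restricted to S - R; T(S) = TCR {} S.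
  Wch s TCR U i is the child W_i of U (with W_0 = {}, so W_1 = Hi(T(U))).\<close>
fun Wch :: "real \<Rightarrow> ('a set \<Rightarrow> 'a set \<Rightarrow> 'a \<Rightarrow> 'a rtree) \<Rightarrow> 'a set \<Rightarrow> nat \<Rightarrow> 'a set" where
  "Wch s TCR U 0 = {}"
| "Wch s TCR U (Suc i) = Wch s TCR U i \<union> Hi s (U - Wch s TCR U i) (TCR (Wch s TCR U i) U)"

text \<open>Us = [U_1,...,U_p] is a root-to-node path in the hierarchy tree.\<close>
definition hier_path :: "real \<Rightarrow> nat \<Rightarrow> ('a set \<Rightarrow> 'a set \<Rightarrow> 'a \<Rightarrow> 'a rtree) \<Rightarrow> 'a set
    \<Rightarrow> 'a set list \<Rightarrow> bool" where
  "hier_path s d TCR V Us \<longleftrightarrow> Us \<noteq> [] \<and> hd Us = V \<and>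
     (\<forall>i. Suc i < length Us \<longrightarrow> Hi s (Us ! i) (TCR {} (Us ! i)) \<noteq> {} \<and>
        (\<exists>j\<in>{1..d}. Us ! Suc i = Wch s TCR (Us ! i) j))"

text \<open>U_{i+1}, with U_{p+1} = {} (0-indexed).\<close>
definition nextU :: "'a set list \<Rightarrow> nat \<Rightarrow> 'a set" where
  "nextU Us i = (if Suc i < length Us then Us ! Suc i else {})"

text \<open>The trees of the union of the covers T_{U_{i+1}}(U_i), each paired with the
  restricting set U_i - U_{i+1} of its cover.\<close>
definition cov_trees :: "('a set \<Rightarrow> 'a set \<Rightarrow> 'a \<Rightarrow> 'a rtree) \<Rightarrow> 'a set list
    \<Rightarrow> ('a set \<times> 'a rtree) set" where
  "cov_trees TCR Us = {(Us ! i - nextU Us i, TCR (nextU Us i) (Us ! i) w) | i w.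
       i < length Us \<and> w \<in> Us ! i - nextU Us i}"

text \<open>Level (0-indexed; differs from the paper's by the constant 1).\<close>
definition lvl :: "'a set list \<Rightarrow> 'a \<Rightarrow> nat" where
  "lvl Us v = Max {i. i < length Us \<and> v \<in> Us ! i}"

definition NT :: "'a set \<Rightarrow> 'a rtree \<Rightarrow> 'a \<Rightarrow> 'a set" where
  "NT S T f = (if f = troot T then {} else {tparent T f}) \<union> (tchildren T f \<inter> trunk S T)"

definition Nf :: "('a set \<Rightarrow> 'a set \<Rightarrow> 'a \<Rightarrow> 'a rtree) \<Rightarrow> 'a set list \<Rightarrow> 'a \<Rightarrow> 'a set" where
  "Nf TCR Us f = (\<Union>(S, T) \<in> {(S, T) \<in> cov_trees TCR Us. f \<in> tverts T}. NT S T f)"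

definition VH :: "('a set \<Rightarrow> 'a set \<Rightarrow> 'a \<Rightarrow> 'a rtree) \<Rightarrow> 'a set list \<Rightarrow> 'a set \<Rightarrow> 'a \<Rightarrow> 'a \<Rightarrow> 'a set" where
  "VH TCR Us D s0 t0 = ({s0, t0} \<union> (\<Union>f\<in>D. Nf TCR Us f)) - D"

end

theory Submission
  imports Defs
begin

fun isw :: "'a set set \<Rightarrow> 'a list \<Rightarrow> bool" where
  "isw F (a # b # r) = ({a, b} \<in> F \<and> isw F (b # r))"
| "isw F _ = True"

fun wl :: "('a set \<Rightarrow> real) \<Rightarrow> 'a list \<Rightarrow> real" where
  "wl wt (a # b # r) = wt {a, b} + wl wt (b # r)"
| "wl wt _ = 0"

lemma isw_iff: "isw F p \<longleftrightarrow> (\<forall>i. Suc i < length p \<longrightarrow> {p ! i, p ! Suc i} \<in> F)"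
proof (induction F p rule: isw.induct)
  case (1 F a b r)
  show ?case
  proof
    assume h: "isw F (a # b # r)"
    show "\<forall>i. Suc i < length (a # b # r) \<longrightarrow> {(a # b # r) ! i, (a # b # r) ! Suc i} \<in> F"
    proof (intro allI impI)
      fix i assume "Suc i < length (a # b # r)"
      then show "{(a # b # r) ! i, (a # b # r) ! Suc i} \<in> F"
        using h 1 by (cases i) auto
    qed
  next
    assume h: "\<forall>i. Suc i < length (a # b # r) \<longrightarrow> {(a # b # r) ! i, (a # b # r) ! Suc i} \<in> F"
    have "{a, b} \<in> F" using h[rule_format, of 0] by simp
    moreover have "isw F (b # r)" using 1 h[rule_format, of "Suc _"] by auto
    ultimately show "isw F (a # b # r)" by simp
  qed
qed auto

lemma plen_wl: "plen wt p = wl wt p"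
proof (induction wt p rule: wl.induct)
  case (1 wt a b r)
  have "plen wt (a # b # r) = (\<Sum>i<Suc (length r). wt {(a # b # r) ! i, (a # b # r) ! Suc i})"
    by (simp add: plen_def)
  also have "\<dots> = wt {a, b} + (\<Sum>i<length r. wt {(b # r) ! i, (b # r) ! Suc i})"
    by (subst sum.lessThan_Suc_shift) simp
  also have "\<dots> = wt {a, b} + plen wt (b # r)" by (simp add: plen_def)
  finally show ?case using 1 by simp
qed (auto simp: plen_def)

lemma walk_in_iff: "walk_in A F p \<longleftrightarrow> p \<noteq> [] \<and> set p \<subseteq> A \<and> isw F p"
  by (simp add: walk_in_def isw_iff)

lemma path_betw_iff: "path_betw A F u v p \<longleftrightarrow>
   p \<noteq> [] \<and> set p \<subseteq> A \<and> isw F p \<and> distinct p \<and> hd p = u \<and> last p = v"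
  by (auto simp: path_betw_def path_in_def walk_in_iff)

lemma wl_nonneg: "isw F p \<Longrightarrow> \<forall>e\<in>F. 0 \<le> wt e \<Longrightarrow> 0 \<le> wl wt p"
  by (induction F p rule: isw.induct) auto

lemma isw_join: "W1 \<noteq> [] \<Longrightarrow> W2 \<noteq> [] \<Longrightarrow> last W1 = hd W2 \<Longrightarrow>
   isw F (W1 @ tl W2) \<longleftrightarrow> isw F W1 \<and> isw F W2"
proof (induction W1)
  case (Cons a W1)
  then show ?case by (cases W1; cases W2) auto
qed auto

lemma wl_join: "W1 \<noteq> [] \<Longrightarrow> W2 \<noteq> [] \<Longrightarrow> last W1 = hd W2 \<Longrightarrow>
   wl wt (W1 @ tl W2) = wl wt W1 + wl wt W2"
proof (induction W1)
  case (Cons a W1)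
  then show ?case by (cases W1; cases W2) auto
qed auto

lemma join_props: "W1 \<noteq> [] \<Longrightarrow> W2 \<noteq> [] \<Longrightarrow> last W1 = hd W2 \<Longrightarrow>
   W1 @ tl W2 \<noteq> [] \<and> hd (W1 @ tl W2) = hd W1 \<and> last (W1 @ tl W2) = last W2 \<and>
   set (W1 @ tl W2) \<subseteq> set W1 \<union> set W2"
  by (cases W2) (auto simp: list.set_sel)

lemma isw_take: "isw F p \<Longrightarrow> isw F (take m p)"
  by (simp add: isw_iff)

lemma isw_drop: "isw F p \<Longrightarrow> isw F (drop m p)"
  by (simp add: isw_iff)

lemma wl_app_ge1: "isw F (xs @ ys) \<Longrightarrow> \<forall>e\<in>F. 0 \<le> wt e \<Longrightarrow> wl wt xs \<le> wl wt (xs @ ys)"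
proof (induction xs)
  case (Cons a xs)
  show ?case
  proof (cases xs)
    case Nil
    then show ?thesis using wl_nonneg[of F "a # ys" wt] Cons.prems by simp
  next
    case (Cons b r)
    then show ?thesis using Cons.IH Cons.prems \<open>xs = b # r\<close> by simp
  qed
qed (auto intro: wl_nonneg)

lemma wl_app_ge2: "isw F (xs @ ys) \<Longrightarrow> \<forall>e\<in>F. 0 \<le> wt e \<Longrightarrow> wl wt ys \<le> wl wt (xs @ ys)"
proof (induction xs)
  case (Cons a xs)
  then show ?case by (cases "xs @ ys") auto
qed simp

lemma wl_take_le: "isw F p \<Longrightarrow> \<forall>e\<in>F. 0 \<le> wt e \<Longrightarrow> wl wt (take m p) \<le> wl wt p"
  using wl_app_ge1[of F "take m p" "drop m p" wt] by simp

lemma wl_drop_le: "isw F p \<Longrightarrow> \<forall>e\<in>F. 0 \<le> wt e \<Longrightarrow> wl wt (drop m p) \<le> wl wt p"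
  using wl_app_ge2[of F "take m p" "drop m p" wt] by simp

lemma wl_snoc: "wl wt (xs @ [a]) = wl wt xs + (if xs = [] then 0 else wt {last xs, a})"
proof (induction xs)
  case (Cons b xs)
  then show ?case by (cases xs) auto
qed simp

lemma isw_snoc: "isw F (xs @ [a]) \<longleftrightarrow> isw F xs \<and> (xs = [] \<or> {last xs, a} \<in> F)"
proof (induction xs)
  case (Cons b xs)
  then show ?case by (cases xs) auto
qed simp

lemma wl_rev: "wl wt (rev p) = wl wt p"
proof (induction p)
  case (Cons a p)
  have "wl wt (rev (a # p)) = wl wt (rev p) + (if rev p = [] then 0 else wt {last (rev p), a})"
    by (simp only: rev.simps wl_snoc)
  then show ?case using Cons by (cases p) (auto simp: last_rev insert_commute)
qed simp

lemma isw_rev: "isw F (rev p) = isw F p"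
proof (induction p)
  case (Cons a p)
  have "isw F (rev (a # p)) = (isw F (rev p) \<and> (rev p = [] \<or> {last (rev p), a} \<in> F))"
    by (simp only: rev.simps isw_snoc)
  then show ?case using Cons by (cases p) (auto simp: last_rev insert_commute)
qed simp

lemma isw_del: "isw E p \<Longrightarrow> set p \<inter> D = {} \<Longrightarrow> isw (del_edges E D) p"
  by (induction E p rule: isw.induct) (auto simp: del_edges_def)

lemma walk_to_path:
  assumes "isw F p" "p \<noteq> []" "\<forall>e\<in>F. 0 \<le> wt e"
  shows "\<exists>q. isw F q \<and> distinct q \<and> set q \<subseteq> set p \<and> hd q = hd p \<and> last q = last p
           \<and> q \<noteq> [] \<and> wl wt q \<le> wl wt p"
  using assms
proof (induction "length p" arbitrary: p rule: less_induct)
  case less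
  show ?case
  proof (cases "distinct p")
    case True then show ?thesis using less.prems by auto
  next
    case False
    then obtain xs z ys zs where p: "p = xs @ [z] @ ys @ [z] @ zs"
      using not_distinct_decomp by blast
    define p' where "p' = (xs @ [z]) @ tl (z # zs)"
    have e1: "p = (xs @ [z]) @ tl (z # ys @ [z] @ zs)" using p by simp
    have "isw F ((xs @ [z]) @ tl (z # ys @ [z] @ zs))" using less.prems e1 by simp
    hence i1: "isw F (xs @ [z])" and i2: "isw F (z # ys @ [z] @ zs)"
      using isw_join[of "xs @ [z]" "z # ys @ [z] @ zs" F] by auto
    have e2: "z # ys @ [z] @ zs = (z # ys @ [z]) @ tl (z # zs)" by simp
    have "isw F ((z # ys @ [z]) @ tl (z # zs))" using i2 e2 by simp
    hence i3: "isw F (z # ys @ [z])" and i4: "isw F (z # zs)"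
      using isw_join[of "z # ys @ [z]" "z # zs" F] by auto
    have ip': "isw F p'" unfolding p'_def using isw_join[of "xs @ [z]" "z # zs" F] i1 i4 by simp
    have "wl wt p = wl wt (xs @ [z]) + wl wt (z # ys @ [z] @ zs)"
      using e1 wl_join[of "xs @ [z]" "z # ys @ [z] @ zs" wt] by simp
    also have "wl wt (z # ys @ [z] @ zs) = wl wt (z # ys @ [z]) + wl wt (z # zs)"
      using e2 wl_join[of "z # ys @ [z]" "z # zs" wt] by simp
    finally have "wl wt p = wl wt (xs @ [z]) + wl wt (z # ys @ [z]) + wl wt (z # zs)" by simp
    moreover have "wl wt p' = wl wt (xs @ [z]) + wl wt (z # zs)"
      unfolding p'_def using wl_join[of "xs @ [z]" "z # zs" wt] by simp
    moreover have "0 \<le> wl wt (z # ys @ [z])" using wl_nonneg[OF i3 less.prems(3)] .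
    ultimately have wle: "wl wt p' \<le> wl wt p" by simp
    have lp: "length p' < length p" unfolding p'_def using p by simp
    have "p' \<noteq> []" unfolding p'_def by simp
    then obtain q where q: "isw F q \<and> distinct q \<and> set q \<subseteq> set p' \<and> hd q = hd p' \<and> last q = last p'
           \<and> q \<noteq> [] \<and> wl wt q \<le> wl wt p'"
      using less.hyps[OF lp ip'] less.prems(3) by blast
    have "set p' \<subseteq> set p" "hd p' = hd p" "last p' = last p" unfolding p'_def using p
      by (auto simp: hd_append)
    then show ?thesis using q wle by (intro exI[of _ q]) auto
  qed
qed

lemma gdist_le_walk:
  assumes "isw F p" "p \<noteq> []" "set p \<subseteq> A" "\<forall>e\<in>F. 0 \<le> wt e" "hd p = u" "last p = v"
  shows "gdist A F wt u v \<le> ereal (wl wt p)"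
proof -
  obtain q where q: "isw F q \<and> distinct q \<and> set q \<subseteq> set p \<and> hd q = hd p \<and> last q = last p
           \<and> q \<noteq> [] \<and> wl wt q \<le> wl wt p"
    using walk_to_path[OF assms(1,2,4)] by blast
  have "path_betw A F u v q" using q assms by (auto simp: path_betw_iff)
  hence "gdist A F wt u v \<le> ereal (plen wt q)" unfolding gdist_def by (auto intro: INF_lower)
  also have "\<dots> \<le> ereal (wl wt p)" using q by (simp add: plen_wl)
  finally show ?thesis .
qed

lemma tpath_ok: "is_subtree A F T \<Longrightarrow> u \<in> tverts T \<Longrightarrow> v \<in> tverts T \<Longrightarrow>
  path_betw (tverts T) (tedges T) u v (tpath T u v)"
  unfolding tpath_def is_subtree_def by (rule theI') blast

lemma tpath_uniq: "is_subtree A F T \<Longrightarrow> u \<in> tverts T \<Longrightarrow> v \<in> tverts T \<Longrightarrow>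
  path_betw (tverts T) (tedges T) u v p \<Longrightarrow> p = tpath T u v"
  unfolding tpath_def is_subtree_def by (rule the1_equality[symmetric]) blast+

lemma tpath_drop:
  assumes T: "is_subtree A F T" and a: "a \<in> tverts T" and b: "b \<in> tverts T"
    and i: "i < length (tpath T a b)"
  shows "tpath T (tpath T a b ! i) b = drop i (tpath T a b)"
proof -
  let ?q = "tpath T a b"
  have q: "path_betw (tverts T) (tedges T) a b ?q" using tpath_ok[OF T a b] .
  hence qq: "?q \<noteq> [] \<and> set ?q \<subseteq> tverts T \<and> isw (tedges T) ?q \<and> distinct ?q \<and> hd ?q = a \<and> last ?q = b"
    by (simp add: path_betw_iff)
  have "path_betw (tverts T) (tedges T) (?q ! i) b (drop i ?q)"
    unfolding path_betw_iff using qq i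
    by (auto simp: isw_drop hd_drop_conv_nth last_drop dest: in_set_dropD)
  moreover have "?q ! i \<in> tverts T" using qq i nth_mem by blast
  ultimately show ?thesis using tpath_uniq[OF T _ b] by metis
qed

lemma tparent_nth:
  assumes T: "is_subtree A F T" and a: "a \<in> tverts T"
    and i: "Suc i < length (tpath T a (troot T))"
  shows "tparent T (tpath T a (troot T) ! i) = tpath T a (troot T) ! Suc i"
proof -
  have r: "troot T \<in> tverts T" using T by (simp add: is_subtree_def)
  show ?thesis unfolding tparent_def using tpath_drop[OF T a r, of i] i by simp
qed

lemma tpath_not_root:
  assumes T: "is_subtree A F T" and a: "a \<in> tverts T"
    and i: "Suc i < length (tpath T a (troot T))"
  shows "tpath T a (troot T) ! i \<noteq> troot T"
proof -
  let ?q = "tpath T a (troot T)"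
  have r: "troot T \<in> tverts T" using T by (simp add: is_subtree_def)
  have qq: "?q \<noteq> [] \<and> distinct ?q \<and> last ?q = troot T"
    using tpath_ok[OF T a r] by (simp add: path_betw_iff)
  hence "troot T = ?q ! (length ?q - 1)" by (metis last_conv_nth)
  moreover have "?q ! i \<noteq> ?q ! (length ?q - 1)" using qq i by (simp add: nth_eq_iff_index_eq)
  ultimately show ?thesis by simp
qed

lemma Wch_sub:
  assumes covers: "\<forall>R S. R \<subseteq> V \<longrightarrow> S \<subseteq> V \<longrightarrow> is_tree_cover V E wt R (S - R) (TCR R S)"
    and s: "s \<ge> 0" and U: "U \<subseteq> V"
  shows "Wch s TCR U j \<subseteq> V"
proof (induction j)
  case (Suc j)
  let ?W = "Wch s TCR U j"
  have cov: "is_tree_cover V E wt ?W (U - ?W) (TCR ?W U)" using covers Suc U by blast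
  have "Hi s (U - ?W) (TCR ?W U) \<subseteq> V"
  proof
    fix v assume "v \<in> Hi s (U - ?W) (TCR ?W U)"
    then obtain w where w: "w \<in> U - ?W" and pd: "real (pdeg (U - ?W) (TCR ?W U w) v) > s"
      unfolding Hi_def by blast
    let ?T = "TCR ?W U w"
    have "pdeg (U - ?W) ?T v \<noteq> 0" using pd s by auto
    hence "v \<in> trunk (U - ?W) ?T" unfolding pdeg_def by (auto split: if_splits)
    then obtain a b where ab: "a \<in> tverts ?T" "b \<in> tverts ?T" and v: "v \<in> set (tpath ?T a b)"
      unfolding trunk_def by blast
    have st: "is_subtree (V - ?W) (del_edges E ?W) ?T"
      using cov w unfolding is_tree_cover_def Let_def by blast
    have "set (tpath ?T a b) \<subseteq> tverts ?T" using tpath_ok[OF st ab] by (simp add: path_betw_iff)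
    moreover have "tverts ?T \<subseteq> V - ?W" using st by (simp add: is_subtree_def)
    ultimately show "v \<in> V" using v by blast
  qed
  then show ?case using Suc by simp
qed simp

lemma Us_sub:
  assumes covers: "\<forall>R S. R \<subseteq> V \<longrightarrow> S \<subseteq> V \<longrightarrow> is_tree_cover V E wt R (S - R) (TCR R S)"
    and s: "s \<ge> 0" and hp: "hier_path s d TCR V Us"
  shows "i < length Us \<Longrightarrow> Us ! i \<subseteq> V"
proof (induction i)
  case 0
  then show ?case using hp by (cases Us) (auto simp: hier_path_def)
next
  case (Suc i)
  then obtain j where "Us ! Suc i = Wch s TCR (Us ! i) j" using hp unfolding hier_path_def by blast
  then show ?case using Wch_sub[OF covers s] Suc by simp
qed

lemma isw_mono: "F \<subseteq> F' \<Longrightarrow> isw F p \<Longrightarrow> isw F' p"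
  by (auto simp: isw_iff)

theorem lemma3p5:
  fixes V :: "'a set" and E :: "'a set set" and wt :: "'a set \<Rightarrow> real" and W :: real
    and d :: nat and c :: real
    and TCR :: "'a set \<Rightarrow> 'a set \<Rightarrow> 'a \<Rightarrow> 'a rtree"
    and D :: "'a set" and Us :: "'a set list" and s0 t0 f x :: 'a and P :: "'a list"
  defines "n \<equiv> real (card V)"
  defines "k \<equiv> ln n"
  defines "s \<equiv> 4 * exp 1 * real d powr (c + 1) * (ln n)\<^sup>2 + 1"
  assumes graph: "wgraph V E wt W"
    and n3: "card V \<ge> 3"
    and usp: "unique_sp V E wt"
    and d2: "d \<ge> 2" and c1: "c \<ge> 1"
    and covers: "\<forall>R S. R \<subseteq> V \<longrightarrow> S \<subseteq> V \<longrightarrow> is_tree_cover V E wt R (S - R) (TCR R S)"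
    and DV: "D \<subseteq> V" and Dcard: "card D \<le> d"
    and hpath: "hier_path s d TCR V Us"
    and lowdeg: "\<forall>g\<in>D. \<forall>(S, T) \<in> cov_trees TCR Us. g \<in> tverts T \<longrightarrow> real (pdeg S T g) \<le> s"
    and s0: "s0 \<in> V - D" and t0: "t0 \<in> V - D"
    and fD: "f \<in> D" and xV: "x \<in> V - D"
    and lvl: "lvl Us x \<ge> lvl Us f"
    and P: "path_betw V E x f P" and PD: "set P \<inter> D \<subseteq> {f}"
  shows "\<exists>w\<in>VH TCR Us D s0 t0. dist_del V E wt D x w \<le> ereal (2 * k - 1) * ereal (plen wt P)"
  proof -
  have Wnn: "\<forall>e\<in>E. 0 \<le> wt e" using graph unfolding wgraph_def by force
  have s_nn: "s \<ge> 0" unfolding s_def by (simp add: add_nonneg_nonneg)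
  have Pp: "P \<noteq> [] \<and> set P \<subseteq> V \<and> isw E P \<and> distinct P \<and> hd P = x \<and> last P = f"
    using P by (simp add: path_betw_iff)
  have xf: "x \<noteq> f" using xV fD by auto
  have P_eq: "P = butlast P @ [f]" using Pp by (metis append_butlast_last_id)
  have bP: "butlast P \<noteq> []" using Pp xf by (metis P_eq append_Nil hd_append2 list.sel(1) self_append_conv2)
  have xbP: "x \<in> set (butlast P)" using Pp bP P_eq by (metis hd_append2 hd_in_set)
  have fnb: "f \<notin> set (butlast P)" using Pp P_eq by (metis distinct_append disjoint_iff list.set_intros(1))
  have setP: "set P = insert f (set (butlast P))" using P_eq by (metis Un_insert_right append_Nil2 set_append list.set(2) list.set(1))
  have Us0: "Us \<noteq> [] \<and> Us ! 0 = V" using hpath unfolding hier_path_def by (metis hd_conv_nth)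
  have lv: "v \<in> Us ! lvl Us v \<and> lvl Us v < length Us \<and> (\<forall>i. i < length Us \<longrightarrow> v \<in> Us ! i \<longrightarrow> i \<le> lvl Us v)"
    if "v \<in> V" for v
  proof -
    let ?L = "{i. i < length Us \<and> v \<in> Us ! i}"
    have fin: "finite ?L" by simp
    have ne: "0 \<in> ?L" using Us0 that by simp
    have "lvl Us v \<in> ?L" unfolding lvl_def using Max_in[OF fin] ne by blast
    moreover have "\<forall>i. i < length Us \<longrightarrow> v \<in> Us ! i \<longrightarrow> i \<le> lvl Us v"
      unfolding lvl_def using Max_ge[OF fin] by blast
    ultimately show ?thesis by simp
  qed
  define j where "j = Max (lvl Us ` set (butlast P))"
  have finb: "finite (lvl Us ` set (butlast P))" by simp
  obtain y where ybP: "y \<in> set (butlast P)" and yj: "lvl Us y = j"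
  proof -
    have "Max (lvl Us ` set (butlast P)) \<in> lvl Us ` set (butlast P)" using Max_in[OF finb] bP by simp
    then obtain y' where "y' \<in> set (butlast P)" "Max (lvl Us ` set (butlast P)) = lvl Us y'" by (auto simp del: Max_in)
    then show ?thesis using that unfolding j_def by simp
  qed
  have lvP: "lvl Us v \<le> j" if "v \<in> set P" for v
  proof (cases "v = f")
    case True
    have "lvl Us x \<le> j" unfolding j_def using xbP finb by simp
    then show ?thesis using True lvl by simp
  next
    case False
    then have "v \<in> set (butlast P)" using setP that by auto
    then show ?thesis unfolding j_def using finb by simp
  qed
  have yP: "y \<in> set P" using ybP setP by auto
  have yf: "y \<noteq> f" using ybP fnb by auto
  have yD: "y \<notin> D" using yP yf PD by auto
  have yV: "y \<in> V" using yP Pp by auto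
  obtain iy where iy: "iy < length P - 1" "P ! iy = y"
    using ybP by (auto simp: in_set_conv_nth nth_butlast)
  have jlt: "j < length Us" using lv[OF yV] yj by simp
  define R where "R = nextU Us j"
  define S where "S = Us ! j"
  have SV: "S \<subseteq> V" unfolding S_def using Us_sub[OF covers s_nn hpath jlt] .
  have RV: "R \<subseteq> V" unfolding R_def nextU_def using Us_sub[OF covers s_nn hpath] by auto
  have PR: "v \<notin> R" if "v \<in> set P" for v
  proof
    assume "v \<in> R"
    then have "Suc j < length Us" "v \<in> Us ! Suc j" unfolding R_def nextU_def by (auto split: if_splits)
    then have "Suc j \<le> lvl Us v" using lv[of v] that Pp by auto
    then show False using lvP[OF that] by simp
  qed
  have yS: "y \<in> S - R" using lv[OF yV] yj PR[OF yP] unfolding S_def by simp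
  have fV: "f \<in> V - R" using PR[of f] Pp by auto
  have cov: "is_tree_cover V E wt R (S - R) (TCR R S)" using covers RV SV by blast
  define P2 where "P2 = drop iy P"
  have P2p: "P2 \<noteq> [] \<and> hd P2 = y \<and> last P2 = f \<and> set P2 \<subseteq> set P \<and> isw E P2"
    unfolding P2_def using iy Pp by (auto simp: hd_drop_conv_nth last_drop isw_drop dest: in_set_dropD)
  have dR: "dist_del V E wt R y f \<le> ereal (wl wt P2)"
    unfolding dist_del_def
  proof (rule gdist_le_walk)
    show "isw (del_edges E R) P2" using isw_del[of E P2 R] P2p PR by blast
    show "\<forall>e\<in>del_edges E R. 0 \<le> wt e" using Wnn by (auto simp: del_edges_def)
  qed (use P2p Pp PR in auto)
  have "k \<ge> 1"
  proof -
    have "exp 1 \<le> n" using exp_le n3 unfolding n_def by linarith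
    moreover have "0 < exp (1::real)" by simp
    ultimately have "ln (exp 1) \<le> ln n" by (subst ln_le_cancel_iff) linarith+
    then show ?thesis unfolding k_def by simp
  qed
  have covd: "\<forall>u\<in>S - R. \<forall>v\<in>V - R. dist_del V E wt R u v < \<infinity> \<longrightarrow>
          (\<exists>w\<in>S - R. u \<in> tverts (TCR R S w) \<and> v \<in> tverts (TCR R S w) \<and>
             ereal (dep wt (TCR R S w) u + dep wt (TCR R S w) v) \<le> ereal (2 * k - 1) * dist_del V E wt R u v)"
    unfolding k_def n_def
    by (rule cov[unfolded is_tree_cover_def Let_def, THEN conjunct2, THEN conjunct2, THEN conjunct1])
  have covt: "\<forall>w\<in>S - R. is_subtree (V - R) (del_edges E R) (TCR R S w) \<and> troot (TCR R S w) = w"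
    by (rule cov[unfolded is_tree_cover_def Let_def, THEN conjunct2, THEN conjunct1])
  have "dist_del V E wt R y f < \<infinity>" using le_less_trans[OF dR, of "\<infinity>"] by simp
  then obtain w where w: "w \<in> S - R" and yT: "y \<in> tverts (TCR R S w)" and fT: "f \<in> tverts (TCR R S w)"
     and depb: "ereal (dep wt (TCR R S w) y + dep wt (TCR R S w) f) \<le> ereal (2 * k - 1) * dist_del V E wt R y f"
    using covd yS fV by blast
  define T where "T = TCR R S w"
  have st: "is_subtree (V - R) (del_edges E R) T" and rt: "troot T = w" using covt w unfolding T_def by auto
  have wT: "w \<in> tverts T" using st rt by (simp add: is_subtree_def)
  have tE: "tedges T \<subseteq> E" using st by (auto simp: is_subtree_def del_edges_def)
  have tV: "tverts T \<subseteq> V" using st by (auto simp: is_subtree_def)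
  have tnn: "\<forall>e\<in>tedges T. 0 \<le> wt e" using tE Wnn by auto
  have depb2: "dep wt T y + dep wt T f \<le> (2 * k - 1) * wl wt P2"
  proof -
    have "ereal (2 * k - 1) * dist_del V E wt R y f \<le> ereal (2 * k - 1) * ereal (wl wt P2)"
      using dR \<open>k \<ge> 1\<close> by (intro ereal_mult_left_mono) auto
    then have "ereal (dep wt T y + dep wt T f) \<le> ereal (2 * k - 1) * ereal (wl wt P2)"
      using depb unfolding T_def by (rule order_trans[rotated])
    then show ?thesis by simp
  qed
  define q where "q = tpath T y w"
  define q' where "q' = tpath T f w"
  have qp: "q \<noteq> [] \<and> set q \<subseteq> tverts T \<and> isw (tedges T) q \<and> distinct q \<and> hd q = y \<and> last q = w"
    using tpath_ok[OF st yT[folded T_def] wT] unfolding q_def by (simp add: path_betw_iff)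
  have qp': "q' \<noteq> [] \<and> set q' \<subseteq> tverts T \<and> isw (tedges T) q' \<and> distinct q' \<and> hd q' = f \<and> last q' = w"
    using tpath_ok[OF st fT[folded T_def] wT] unfolding q'_def by (simp add: path_betw_iff)
  have depy: "dep wt T y = wl wt q" and depf: "dep wt T f = wl wt q'"
    unfolding dep_def q_def q'_def rt plen_wl by auto
  have wq: "0 \<le> wl wt q" "0 \<le> wl wt q'" using wl_nonneg qp qp' tnn by blast+
  have STc: "(S - R, T) \<in> cov_trees TCR Us"
    unfolding cov_trees_def T_def S_def R_def using jlt w[unfolded S_def R_def] by blast
  have main: "\<exists>g z Wb. g \<in> D \<and> g \<in> tverts T \<and> z \<in> NT (S - R) T g \<and> z \<notin> D \<and> Wb \<noteq> [] \<and>
     hd Wb = y \<and> last Wb = z \<and> isw E Wb \<and> set Wb \<subseteq> V \<and> set Wb \<inter> D = {} \<and>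
     wl wt Wb \<le> wl wt q + wl wt q'"
  proof (cases "set q \<inter> D = {}")
    case False
    then obtain v0 where "v0 \<in> set q" "v0 \<in> D" by blast
    then obtain i0 where i0: "i0 < length q" "q ! i0 \<in> D" using in_set_conv_nth[of v0 q] by blast
    define m where "m = (LEAST m. m < length q \<and> q ! m \<in> D)"
    have m: "m < length q" "q ! m \<in> D" using LeastI[of "\<lambda>m. m < length q \<and> q ! m \<in> D" i0] i0
      unfolding m_def by auto
    have mmin: "q ! i \<notin> D" if "i < m" for i
      using not_less_Least[of i "\<lambda>m. m < length q \<and> q ! m \<in> D"] that m unfolding m_def by auto
    have q0: "q ! 0 = y" using qp by (metis hd_conv_nth)
    have m0: "m \<noteq> 0"
    proof
      assume "m = 0"
      then show False using m q0 yD by simp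
    qed
    define z where "z = q ! (m - 1)"
    define g where "g = q ! m"
    have Sm: "Suc (m - 1) = m" using m0 by simp
    have par: "tparent T z = g" unfolding z_def g_def q_def
      using tparent_nth[OF st yT[folded T_def], of "m - 1"] m Sm rt unfolding q_def by simp
    have nr: "z \<noteq> troot T" unfolding z_def q_def
      using tpath_not_root[OF st yT[folded T_def], of "m - 1"] m Sm rt unfolding q_def by simp
    have zq: "z \<in> set q" unfolding z_def using m by simp
    have zT: "z \<in> tverts T" using zq qp by auto
    have "z \<in> tchildren T g" unfolding tchildren_def using zT nr par by simp
    moreover have "z \<in> trunk (S - R) T" unfolding trunk_def
      using yS yT[folded T_def] w wT zq unfolding q_def by blast
    ultimately have zN: "z \<in> NT (S - R) T g" unfolding NT_def by simp
    have gT: "g \<in> tverts T" unfolding g_def using m qp nth_mem by blast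
    define Wb where "Wb = take m q"
    have "Wb \<noteq> []" "hd Wb = y" "last Wb = z" unfolding Wb_def z_def using m0 m q0 qp
      by (auto simp: hd_take last_conv_nth)
    moreover have "isw E Wb" unfolding Wb_def using isw_mono[OF tE isw_take[of "tedges T" q m]] qp by simp
    moreover have "set Wb \<subseteq> V" unfolding Wb_def using qp tV by (auto dest: in_set_takeD)
    moreover have "set Wb \<inter> D = {}"
    proof -
      have "v \<notin> D" if "v \<in> set Wb" for v
      proof -
        have "\<exists>i<length Wb. Wb ! i = v" using that by (simp add: in_set_conv_nth)
        then obtain i where "i < length Wb" "Wb ! i = v" by blast
        then show ?thesis unfolding Wb_def using mmin m by auto
      qed
      then show ?thesis by blast
    qed
    moreover have "wl wt Wb \<le> wl wt q + wl wt q'" unfolding Wb_def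
      using wl_take_le[of "tedges T" q wt m] qp tnn wq by simp
    moreover have "z \<notin> D" unfolding z_def using mmin m0 by simp
    ultimately show ?thesis using m(2) gT zN unfolding g_def[symmetric]
      by (intro exI[of _ g] exI[of _ z] exI[of _ Wb]) simp
  next
    case True
    have wD: "w \<notin> D" using True qp by (metis disjoint_iff last_in_set)
    have q'0: "q' ! 0 = f" using qp' by (metis hd_conv_nth)
    define m where "m = (GREATEST m. m < length q' \<and> q' ! m \<in> D)"
    have ex0: "0 < length q' \<and> q' ! 0 \<in> D" using q'0 fD qp' by simp
    have bnd: "\<And>y. y < length q' \<and> q' ! y \<in> D \<Longrightarrow> y \<le> length q'" by simp
    have m: "m < length q'" "q' ! m \<in> D"
      using GreatestI_nat[of "\<lambda>m. m < length q' \<and> q' ! m \<in> D" 0, OF ex0 bnd] unfolding m_def by auto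
    have mmax: "q' ! i \<notin> D" if "m < i" "i < length q'" for i
    proof
      assume "q' ! i \<in> D"
      then have "i \<le> m" using Greatest_le_nat[of "\<lambda>m. m < length q' \<and> q' ! m \<in> D" i, OF _ bnd] that
        unfolding m_def by auto
      then show False using that by simp
    qed
    have lastq': "q' ! (length q' - 1) = w" using qp' by (metis last_conv_nth)
    have mlt: "Suc m < length q'"
    proof (rule ccontr)
      assume "\<not> Suc m < length q'"
      then have "m = length q' - 1" using m by simp
      then show False using m lastq' wD by simp
    qed
    define z where "z = q' ! Suc m"
    define g where "g = q' ! m"
    have par: "tparent T g = z" unfolding z_def g_def q'_def
      using tparent_nth[OF st fT[folded T_def], of m] mlt rt unfolding q'_def by simp
    have nr: "g \<noteq> troot T" unfolding g_def q'_def
      using tpath_not_root[OF st fT[folded T_def], of m] mlt rt unfolding q'_def by simp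
    have zN: "z \<in> NT (S - R) T g" unfolding NT_def using nr par by simp
    have gT: "g \<in> tverts T" unfolding g_def using m qp' nth_mem by blast
    have zD: "z \<notin> D" unfolding z_def using mmax mlt by simp
    define B where "B = rev (drop (Suc m) q')"
    have Bp: "B \<noteq> [] \<and> hd B = w \<and> last B = z \<and> isw (tedges T) B \<and> set B \<subseteq> set q'"
      unfolding B_def z_def using mlt qp'
      by (auto simp: hd_rev last_rev last_drop hd_drop_conv_nth isw_rev isw_drop dest: in_set_dropD)
    have BD: "set B \<inter> D = {}"
    proof -
      have "v \<notin> D" if "v \<in> set B" for v
      proof -
        have "v \<in> set (drop (Suc m) q')" using that unfolding B_def by simp
        then have "\<exists>i<length (drop (Suc m) q'). drop (Suc m) q' ! i = v" by (simp add: in_set_conv_nth)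
        then obtain i where "i < length (drop (Suc m) q')" "drop (Suc m) q' ! i = v" by blast
        then show ?thesis using mmax[of "Suc m + i"] by auto
      qed
      then show ?thesis by blast
    qed
    define Wb where "Wb = q @ tl B"
    have j: "Wb \<noteq> [] \<and> hd Wb = hd q \<and> last Wb = last B \<and> set Wb \<subseteq> set q \<union> set B"
      using join_props[of q B] qp Bp unfolding Wb_def by simp
    have "isw (tedges T) Wb" using isw_join[of q B "tedges T"] qp Bp unfolding Wb_def by simp
    then have "isw E Wb" using isw_mono[OF tE] by blast
    moreover have "wl wt Wb = wl wt q + wl wt B" using wl_join[of q B wt] qp Bp unfolding Wb_def by simp
    moreover have "wl wt B \<le> wl wt q'" unfolding B_def wl_rev
      using wl_drop_le[of "tedges T" q' wt] qp' tnn by simp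
    moreover have "set Wb \<subseteq> V" using j qp Bp qp' tV by blast
    moreover have "set Wb \<inter> D = {}" using j True BD by blast
    ultimately show ?thesis using j qp Bp m(2) gT zN zD unfolding g_def[symmetric]
      by (intro exI[of _ g] exI[of _ z] exI[of _ Wb]) simp
  qed
  then obtain g z Wb where g: "g \<in> D" "g \<in> tverts T" and z: "z \<in> NT (S - R) T g" "z \<notin> D"
    and Wb: "Wb \<noteq> [] \<and> hd Wb = y \<and> last Wb = z \<and> isw E Wb \<and> set Wb \<subseteq> V \<and> set Wb \<inter> D = {} \<and>
     wl wt Wb \<le> wl wt q + wl wt q'" by blast
  have "z \<in> Nf TCR Us g" unfolding Nf_def using STc g z by (intro UN_I[of "(S - R, T)"]) auto
  then have zVH: "z \<in> VH TCR Us D s0 t0"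
    unfolding VH_def using g z by blast
  define Wa where "Wa = take (Suc iy) P"
  have Wap: "Wa \<noteq> [] \<and> hd Wa = x \<and> last Wa = y \<and> isw E Wa \<and> set Wa \<subseteq> V \<and> set Wa \<inter> D = {}"
  proof -
    have "set Wa \<inter> D = {}"
    proof (rule ccontr)
      assume "set Wa \<inter> D \<noteq> {}"
      then obtain i where i: "i < Suc iy" "P ! i \<in> D" unfolding Wa_def using iy
        by (auto simp: in_set_conv_nth)
      have "i < length P" using i iy by simp
      then have "P ! i \<in> set P" by (rule nth_mem)
      then have "P ! i = f" using PD i(2) by blast
      moreover have "f = P ! (length P - 1)" using Pp by (metis last_conv_nth)
      ultimately show False using Pp i iy by (simp add: nth_eq_iff_index_eq)
    qed
    moreover have "last Wa = y" unfolding Wa_def using iy by (simp add: take_Suc_conv_app_nth)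
    ultimately show ?thesis unfolding Wa_def using Pp iy
      by (auto simp: isw_take hd_take dest: in_set_takeD)
  qed
  define Wk where "Wk = Wa @ tl Wb"
  have Wkp: "isw E Wk \<and> Wk \<noteq> [] \<and> set Wk \<subseteq> V - D \<and> hd Wk = x \<and> last Wk = z"
  proof -
    have j: "Wk \<noteq> [] \<and> hd Wk = hd Wa \<and> last Wk = last Wb \<and> set Wk \<subseteq> set Wa \<union> set Wb"
      using join_props[of Wa Wb] Wap Wb unfolding Wk_def by simp
    have "isw E Wk" using isw_join[of Wa Wb E] Wap Wb unfolding Wk_def by simp
    then show ?thesis using j Wap Wb by blast
  qed
  have "dist_del V E wt D x z \<le> ereal (wl wt Wk)"
    unfolding dist_del_def
  proof (rule gdist_le_walk)
    show "isw (del_edges E D) Wk" using isw_del[of E Wk D] Wkp by blast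
    show "\<forall>e\<in>del_edges E D. 0 \<le> wt e" using Wnn by (auto simp: del_edges_def)
  qed (use Wkp in auto)
  moreover have "wl wt Wk = wl wt Wa + wl wt Wb" unfolding Wk_def using wl_join[of Wa Wb wt] Wap Wb by simp
  moreover have "wl wt P = wl wt Wa + wl wt P2"
  proof -
    have "P = Wa @ tl P2" unfolding Wa_def P2_def by (metis append_take_drop_id drop_Suc tl_drop)
    then show ?thesis using wl_join[of Wa P2 wt] Wap P2p by simp
  qed
  moreover have "0 \<le> wl wt Wa" using wl_nonneg[of E Wa wt] Wap Wnn by simp
  ultimately have "dist_del V E wt D x z \<le> ereal ((2 * k - 1) * wl wt P)"
  proof -
    assume a1: "dist_del V E wt D x z \<le> ereal (wl wt Wk)" and a2: "wl wt Wk = wl wt Wa + wl wt Wb"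
      and a3: "wl wt P = wl wt Wa + wl wt P2" and a4: "0 \<le> wl wt Wa"
    have "wl wt Wa \<le> (2 * k - 1) * wl wt Wa" using mult_right_mono[of 1 "2 * k - 1" "wl wt Wa"] a4 \<open>k \<ge> 1\<close> by simp
    moreover have "(2 * k - 1) * wl wt P = (2 * k - 1) * wl wt Wa + (2 * k - 1) * wl wt P2"
      using a3 by (simp add: distrib_left)
    ultimately have "wl wt Wk \<le> (2 * k - 1) * wl wt P" using a2 depb2 depy depf Wb by linarith
    then show ?thesis using a1 by (meson ereal_less_eq(3) order_trans)
  qed
  then show ?thesis using zVH by (intro bexI[of _ z]) (auto simp: plen_wl)
qed

end
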